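(* Let $\alpha\in[\tfrac12,1)$, $N_1\ge N_2\ge1$, and for $\tau\in\mathbb N$ let $$\Lambda_{N_1,N_2,\tau}=\{(n_1,n_2)\in\mathbb N^2:\ n_1\sim N_1,\ n_2\sim N_2,\ |z_{n_1}^{2\alpha}+z_{n_2}^{2\alpha}-\tau|\le\tfrac12\}.$$ Then (1) $\#\Lambda_{N_1,N_2,\tau}=O(N_2)$ uniformly in $\tau$; and (2) for $n_1\sim N_1$, $n_2\sim N_2$ and every $\varepsilon>0$, $\|e_{n_1}e_{n_2}\|_{L^2(\Theta)}^2\lesssim_\varepsilon N_2^{\varepsilon}$.
   Context: $\Theta\subset\mathbb R^2$ is the unit disk; $0<z_1<z_2<\cdots$ are the positive zeros of the Bessel function $J_0$ (so $z_n=\pi(n-\frac12)+O(1/n)$), and $e_n(x)=\|J_0(z_n|\cdot|)\|_{L^2(\Theta)}^{-1}J_0(z_n|x|)$ are the normalized radial Dirichlet eigenfunctions of $-\Delta$ on $\Theta$. $n\sim N$ means $N\le n<2N$ (up to fixed constants). *)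

theory Defs
  imports "HOL-Analysis.Analysis"
begin

definition J0 :: "real \<Rightarrow> real" where
  "J0 x = (\<Sum>k. ((-1) ^ k / (fact k)\<^sup>2) * (x / 2) ^ (2 * k))"

text \<open>The n-th positive zero of J0 (n \<ge> 1): the positive zero having exactly n-1
  positive zeros strictly below it.\<close>
definition bessel_zero :: "nat \<Rightarrow> real" where
  "bessel_zero n = (THE x. 0 < x \<and> J0 x = 0 \<and>
      card {y. 0 < y \<and> y < x \<and> J0 y = 0} = n - 1)"

definition Theta :: "(real ^ 2) set" where
  "Theta = ball 0 1"

definition L2sq :: "(real ^ 2 \<Rightarrow> real) \<Rightarrow> real" where
  "L2sq f = (LINT x : Theta | lborel. (f x)\<^sup>2)"

text \<open>Normalized radial Dirichlet eigenfunctions.\<close>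
definition efun :: "nat \<Rightarrow> real ^ 2 \<Rightarrow> real" where
  "efun n x = J0 (bessel_zero n * norm x) / sqrt (L2sq (\<lambda>y. J0 (bessel_zero n * norm y)))"

definition sim :: "nat \<Rightarrow> nat \<Rightarrow> bool" where
  "sim n N \<longleftrightarrow> N \<le> n \<and> n < 2 * N"

definition Lambda :: "real \<Rightarrow> nat \<Rightarrow> nat \<Rightarrow> nat \<Rightarrow> (nat \<times> nat) set" where
  "Lambda \<alpha> N1 N2 \<tau> = {(n1, n2). sim n1 N1 \<and> sim n2 N2 \<and>
     \<bar>bessel_zero n1 powr (2 * \<alpha>) + bessel_zero n2 powr (2 * \<alpha>) - real \<tau>\<bar> \<le> 1 / 2}"

end

theory Submission
  imports Defs "HOL-Analysis.Analysis"
begin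


definition cJ :: "nat \<Rightarrow> real" where
  "cJ n = (if even n then (-1)^(n div 2) / (fact (n div 2))^2 / 2^n else 0)"

lemma fact_double_le: "(fact (2*k) :: real) \<le> (fact k)^2 * 4^k"
proof -
  have "fact k * fact (2*k - k) * (2*k choose k) = (fact (2*k) :: nat)"
    using binomial_fact_lemma[of k "2*k"] by linarith
  hence "real (fact k * fact k * (2*k choose k)) = real (fact (2*k))"
    by (metis mult_2 diff_add_inverse2)
  hence "(fact (2*k) :: real) = fact k * fact k * real (2*k choose k)"
    by (simp only: of_nat_mult of_nat_fact)
  also have "real (2*k choose k) \<le> 4^k"
    proof -
    have "real (2*k choose k) \<le> 2^(2*k)" using binomial_le_pow2[of "2*k" k]
      by (metis of_nat_le_iff of_nat_numeral of_nat_power)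
    thus ?thesis by (simp add: power_mult)
  qed
  hence "fact k * fact k * real (2*k choose k) \<le> fact k * fact k * 4^k"
    by (intro mult_left_mono) auto
  finally show ?thesis by (simp add: power2_eq_square)
qed

lemma cJ_bound: "\<bar>cJ n\<bar> \<le> 1 / fact n"
proof (cases "even n")
  case True
  then obtain k where n: "n = 2*k" by auto
  have "(fact (2*k) :: real) \<le> (fact k)^2 * 4^k" by (rule fact_double_le)
  moreover have "(2::real)^(2*k) = 4^k" by (simp add: power_mult)
  ultimately have "1 / ((fact k)^2 * 2^(2*k)) \<le> (1 / fact (2*k) :: real)"
    by (intro divide_left_mono) auto
  moreover have "\<bar>cJ n\<bar> = 1 / ((fact k)^2 * 2^(2*k))"
    using n by (simp add: cJ_def abs_divide)
  ultimately show ?thesis using n by simp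
qed (simp add: cJ_def)

lemma cJ_summable: "summable (\<lambda>n. cJ n * y^n)"
proof (rule summable_comparison_test)
  show "\<exists>N. \<forall>n\<ge>N. norm (cJ n * y ^ n) \<le> \<bar>y\<bar>^n / fact n"
  proof (intro exI allI impI)
    fix n :: nat
    have "norm (cJ n * y ^ n) = \<bar>cJ n\<bar> * \<bar>y\<bar>^n" by (simp add: abs_mult power_abs)
    also have "\<dots> \<le> (1 / fact n) * \<bar>y\<bar>^n" by (intro mult_right_mono cJ_bound) auto
    finally show "norm (cJ n * y ^ n) \<le> \<bar>y\<bar>^n / fact n" by simp
  qed
  show "summable (\<lambda>n. \<bar>y\<bar>^n / fact n)" using summable_exp[of "\<bar>y\<bar>"]
    by (simp add: inverse_eq_divide)
qed

lemma J0_powser: "J0 x = (\<Sum>n. cJ n * x^n)"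
proof -
  let ?f = "\<lambda>n. cJ n * x^n"
  have "?f sums (suminf ?f)" using cJ_summable by (rule summable_sums)
  moreover have "(\<lambda>k. ?f (2*k)) sums s \<longleftrightarrow> ?f sums s" for s
    by (rule sums_mono_reindex) (auto simp: strict_mono_def cJ_def)
  ultimately have "(\<lambda>k. ?f (2*k)) sums (suminf ?f)" by blast
  moreover have "?f (2*k) = ((-1) ^ k / (fact k)\<^sup>2) * (x / 2) ^ (2 * k)" for k
    by (simp add: cJ_def power_divide)
  ultimately show ?thesis unfolding J0_def by (simp add: sums_iff)
qed


definition D1 :: "real \<Rightarrow> real" where "D1 x = (\<Sum>n. diffs cJ n * x^n)"
definition D2 :: "real \<Rightarrow> real" where "D2 x = (\<Sum>n. diffs (diffs cJ) n * x^n)"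

lemma d1_summable: "summable (\<lambda>n. diffs cJ n * y^n)"
  by (rule termdiff_converges_all) (rule cJ_summable)
lemma d2_summable: "summable (\<lambda>n. diffs (diffs cJ) n * y^n)"
  by (rule termdiff_converges_all) (rule d1_summable)

lemma J0_deriv: "(J0 has_real_derivative D1 x) (at x)"
proof -
  have "J0 = (\<lambda>x. \<Sum>n. cJ n * x^n)" using J0_powser by auto
  thus ?thesis unfolding D1_def
    using termdiffs_strong_converges_everywhere[of cJ x] cJ_summable by simp
qed

lemma D1_deriv: "(D1 has_real_derivative D2 x) (at x)"
  unfolding D1_def D2_def
  using termdiffs_strong_converges_everywhere[of "diffs cJ" x] d1_summable by simp

lemma D2_deriv: "(D2 has_real_derivative (\<Sum>n. diffs (diffs (diffs cJ)) n * x^n)) (at x)"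
  unfolding D2_def
  using termdiffs_strong_converges_everywhere[of "diffs (diffs cJ)" x] d2_summable by simp

lemma J0_cont: "continuous_on S J0"
  using J0_deriv by (meson DERIV_isCont continuous_at_imp_continuous_on)
lemma D1_cont: "continuous_on S D1"
  using D1_deriv by (meson DERIV_isCont continuous_at_imp_continuous_on)
lemma D2_cont: "continuous_on S D2"
  using D2_deriv by (meson DERIV_isCont continuous_at_imp_continuous_on)
lemma J0_isCont: "isCont J0 x" using J0_deriv DERIV_isCont by blast
lemma D1_isCont: "isCont D1 x" using D1_deriv DERIV_isCont by blast
lemma D2_isCont: "isCont D2 x" using D2_deriv DERIV_isCont by blast

lemma J0_0: "J0 0 = 1"
  using powser_zero[of cJ] by (simp add: J0_powser cJ_def)
lemma D1_0: "D1 0 = 0"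
  using powser_zero[of "diffs cJ"] by (simp add: D1_def diffs_def cJ_def)

lemma shift_sums:
  fixes a :: "nat \<Rightarrow> real"
  assumes "(\<lambda>n. a n * x^n) sums s"
  shows "(\<lambda>n. (if n = 0 then 0 else a (n - 1)) * x^n) sums (x * s)"
proof -
  have "(\<lambda>n. x * (a n * x^n)) sums (x * s)" using sums_mult[OF assms] .
  hence "(\<lambda>n. (\<lambda>n. (if n = 0 then 0 else a (n - 1)) * x^n) (Suc n)) sums (x * s)"
    by (simp add: algebra_simps)
  thus ?thesis by (subst (asm) sums_Suc_iff) simp
qed

lemma coeff_zero:
  "(if n = 0 then 0 else diffs (diffs cJ) (n - 1)) + diffs cJ n + (if n = 0 then 0 else cJ (n - 1)) = 0"
proof (cases n)
  case 0 thus ?thesis by (simp add: diffs_def cJ_def)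
next
  case (Suc m)
  have e: "diffs (diffs cJ) m + diffs cJ (Suc m) = real (Suc (Suc m))^2 * cJ (Suc (Suc m))"
    by (simp add: diffs_def power2_eq_square algebra_simps)
  show ?thesis
  proof (cases "even m")
    case False thus ?thesis using Suc e by (simp add: cJ_def)
  next
    case True
    then obtain k where m: "m = 2*k" by auto
    have f: "(fact (Suc k) :: real) = real (Suc k) * fact k" by (rule fact_Suc)
    have c2: "cJ (Suc (Suc m)) = (-1)^(Suc k) / (real (Suc k) * fact k)^2 / (4 * 2^(2*k))"
      unfolding cJ_def using m f by (simp add: power_Suc)
    have c0: "cJ m = (-1)^k / (fact k)^2 / 2^(2*k)" unfolding cJ_def using m by simp
    have fk: "(fact k :: real) > 0" by simp
    have r: "real (Suc (Suc m))^2 = 4 * (real (Suc k))^2" using m by (simp add: power2_eq_square algebra_simps)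
    have g: "\<And>A F P q::real. F > 0 \<Longrightarrow> P > 0 \<Longrightarrow> q > 0 \<Longrightarrow>
       4 * q^2 * ((- A) / (q * F)^2 / (4 * P)) + A / F^2 / P = 0"
      by (simp add: field_simps power2_eq_square)
    have "real (Suc (Suc m))^2 * cJ (Suc (Suc m)) + cJ m = 0"
      unfolding c2 c0 r using g[of "fact k" "2^(2*k)" "real (Suc k)" "(-1)^k"] fk by simp
    thus ?thesis using Suc e by simp
  qed
qed

lemma J0_ode: "x * D2 x + D1 x + x * J0 x = 0"
proof -
  have s1: "(\<lambda>n. (if n = 0 then 0 else diffs (diffs cJ) (n - 1)) * x^n) sums (x * D2 x)"
    unfolding D2_def by (rule shift_sums) (rule summable_sums[OF d2_summable])
  have s2: "(\<lambda>n. diffs cJ n * x^n) sums (D1 x)"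
    unfolding D1_def by (rule summable_sums[OF d1_summable])
  have s3: "(\<lambda>n. (if n = 0 then 0 else cJ (n - 1)) * x^n) sums (x * J0 x)"
    unfolding J0_powser by (rule shift_sums) (rule summable_sums[OF cJ_summable])
  have "(\<lambda>n. (if n = 0 then 0 else diffs (diffs cJ) (n - 1)) * x^n + diffs cJ n * x^n
          + (if n = 0 then 0 else cJ (n - 1)) * x^n) sums (x * D2 x + D1 x + x * J0 x)"
    by (intro sums_add s1 s2 s3)
  moreover have "(\<lambda>n. (if n = 0 then 0 else diffs (diffs cJ) (n - 1)) * x^n + diffs cJ n * x^n
          + (if n = 0 then 0 else cJ (n - 1)) * x^n) = (\<lambda>n. 0)"
  proof
    fix n
    have "((if n = 0 then 0 else diffs (diffs cJ) (n - 1)) + diffs cJ n + (if n = 0 then 0 else cJ (n - 1))) * x^n = 0"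
      using coeff_zero[of n] by simp
    thus "(if n = 0 then 0 else diffs (diffs cJ) (n - 1)) * x^n + diffs cJ n * x^n
          + (if n = 0 then 0 else cJ (n - 1)) * x^n = 0" by (simp add: algebra_simps)
  qed
  ultimately show ?thesis using sums_unique2 sums_zero by metis
qed


lemma D2_eq: "x \<noteq> 0 \<Longrightarrow> D2 x = - D1 x / x - J0 x"
  using J0_ode[of x] by (simp add: field_simps)

lemma E_bound: assumes "0 \<le> x" shows "J0 x ^2 + D1 x ^2 \<le> 1"
proof -
  have "J0 x ^2 + D1 x ^2 \<le> J0 0 ^2 + D1 0 ^2"
  proof (rule DERIV_nonpos_imp_nonincreasing[OF assms])
    fix t assume t: "0 \<le> t" "t \<le> x"
    have d: "((\<lambda>t. J0 t ^2 + D1 t ^2) has_real_derivative (2*J0 t*D1 t + 2*D1 t*D2 t)) (at t)"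
      by (auto intro!: derivative_eq_intros J0_deriv D1_deriv)
    have "2*J0 t*D1 t + 2*D1 t*D2 t \<le> 0"
    proof (cases "t = 0")
      case True thus ?thesis by (simp add: D1_0)
    next
      case False
      hence "2*J0 t*D1 t + 2*D1 t*D2 t = - 2 * D1 t ^2 / t"
        by (simp add: D2_eq field_simps power2_eq_square)
      also have "\<dots> \<le> 0" using t False by (simp add: divide_nonpos_pos)
      finally show ?thesis .
    qed
    thus "\<exists>y. ((\<lambda>t. J0 t ^2 + D1 t ^2) has_real_derivative y) (at t) \<and> y \<le> 0" using d by blast
  qed
  thus ?thesis by (simp add: J0_0 D1_0)
qed

lemma J0_le1: assumes "0 \<le> x" shows "\<bar>J0 x\<bar> \<le> 1"
proof -
  have "J0 x ^2 \<le> 1" using E_bound[OF assms] zero_le_power2[of "D1 x"] by linarith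
  thus ?thesis by (simp add: abs_square_le_1)
qed
lemma D1_le1: assumes "0 \<le> x" shows "\<bar>D1 x\<bar> \<le> 1"
proof -
  have "D1 x ^2 \<le> 1" using E_bound[OF assms] zero_le_power2[of "J0 x"] by linarith
  thus ?thesis by (simp add: abs_square_le_1)
qed

definition Fn :: "real \<Rightarrow> real" where
  "Fn x = x * (J0 x ^2 + D1 x ^2) + J0 x * D1 x + J0 x ^2 / (2 * x)"

lemma Fn_deriv: assumes "x > 0" shows "(Fn has_real_derivative (- (J0 x ^2) / (2 * x^2))) (at x)"
proof -
  have "(Fn has_real_derivative
     ((J0 x ^2 + D1 x ^2) + x * (2*J0 x*D1 x + 2*D1 x*D2 x) + (D1 x * D1 x + J0 x * D2 x)
      + ((2 * J0 x * D1 x) * (2 * x) - J0 x^2 * 2) / (2*x)^2)) (at x)"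
    unfolding Fn_def using assms
    by (auto intro!: derivative_eq_intros J0_deriv D1_deriv simp: power2_eq_square mult_ac)
  moreover have "(J0 x ^2 + D1 x ^2) + x * (2*J0 x*D1 x + 2*D1 x*D2 x) + (D1 x * D1 x + J0 x * D2 x)
      + ((2 * J0 x * D1 x) * (2 * x) - J0 x^2 * 2) / (2*x)^2 = - (J0 x ^2) / (2 * x^2)"
    using assms by (simp add: D2_eq field_simps power2_eq_square)
  ultimately show ?thesis by simp
qed

lemma Fn_ge: assumes "x > 0" shows "x * J0 x ^2 \<le> Fn x"
proof -
  have "0 \<le> (x * D1 x + J0 x / 2)^2 + (J0 x)^2/4" by simp
  moreover have "x * D1 x ^2 + J0 x * D1 x + J0 x ^2 / (2 * x) = ((x * D1 x + J0 x / 2)^2 + (J0 x)^2/4) / x"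
    using assms by (simp add: field_simps power2_eq_square)
  ultimately have "0 \<le> x * D1 x ^2 + J0 x * D1 x + J0 x ^2 / (2 * x)"
    using assms by simp
  thus ?thesis unfolding Fn_def by (simp add: algebra_simps)
qed

lemma x0_exists: "\<exists>t. 0 < t \<and> t \<le> 1 \<and> (\<forall>s. 0 \<le> s \<and> s \<le> t \<longrightarrow> J0 s > 1/2)"
proof -
  have "continuous (at 0) J0" using J0_isCont by simp
  then obtain d where d: "d > 0" "\<And>s. dist s 0 < d \<Longrightarrow> dist (J0 s) (J0 0) < 1/2"
    unfolding continuous_at_eps_delta by (metis divide_pos_pos zero_less_one zero_less_numeral)
  show ?thesis
  proof (intro exI conjI allI impI)
    show "0 < min (d/2) 1" using d by simp
    show "min (d/2) 1 \<le> 1" by simp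
    fix s assume "0 \<le> s \<and> s \<le> min (d/2) 1"
    hence "dist s 0 < d" using d by (simp add: dist_real_def)
    hence "dist (J0 s) 1 < 1/2" using d J0_0 by simp
    thus "J0 s > 1/2" unfolding dist_real_def by linarith
  qed
qed

definition x0 :: real where
  "x0 = (SOME t. 0 < t \<and> t \<le> 1 \<and> (\<forall>s. 0 \<le> s \<and> s \<le> t \<longrightarrow> J0 s > 1/2))"

lemma x0: "0 < x0" "x0 \<le> 1" "\<And>s. 0 \<le> s \<Longrightarrow> s \<le> x0 \<Longrightarrow> J0 s > 1/2"
  using someI_ex[OF x0_exists] unfolding x0_def[symmetric] by auto

definition Fmax :: real where "Fmax = Fn x0"
definition Fmin :: real where "Fmin = Fn x0 * exp (- 1 / (4 * x0^2))"

lemma Fmax_pos: "Fmax > 0"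
proof -
  have "0 < x0 * J0 x0 ^2" using x0(3)[of x0] x0(1) by simp
  thus ?thesis unfolding Fmax_def using Fn_ge[OF x0(1)] by simp
qed

lemma Fmin_pos: "Fmin > 0" unfolding Fmin_def using Fmax_pos Fmax_def by simp

lemma Fn_upper: assumes "x0 \<le> x" shows "Fn x \<le> Fmax"
  unfolding Fmax_def
proof (rule DERIV_nonpos_imp_nonincreasing[OF assms])
  fix t assume "x0 \<le> t" "t \<le> x"
  hence t: "t > 0" using x0(1) by simp
  have "- (J0 t ^2) / (2 * t^2) \<le> 0" by (simp add: divide_nonpos_pos t)
  thus "\<exists>y. (Fn has_real_derivative y) (at t) \<and> y \<le> 0" using Fn_deriv[OF t] by blast
qed

lemma Fn_lower: assumes "x0 \<le> x" shows "Fmin \<le> Fn x"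
proof -
  let ?G = "\<lambda>t. Fn t * exp (- 1 / (4 * t^2))"
  have "?G x0 \<le> ?G x"
  proof (rule DERIV_nonneg_imp_nondecreasing[OF assms])
    fix t assume "x0 \<le> t" "t \<le> x"
    hence t: "t > 0" using x0(1) by simp
    have g: "((\<lambda>t. - 1 / (4 * t^2)) has_real_derivative 1/(2*t^3)) (at t)"
      using t by (auto intro!: derivative_eq_intros simp: field_simps power2_eq_square power3_eq_cube)
    have d: "(?G has_real_derivative (- (J0 t ^2) / (2 * t^2)) * exp (- 1 / (4 * t^2))
          + (exp (- 1 / (4 * t^2)) * (1/(2*t^3))) * Fn t) (at t)"
      by (rule DERIV_mult[OF Fn_deriv[OF t] DERIV_fun_exp[OF g]])
    have e: "(- (J0 t ^2) / (2 * t^2)) * exp (- 1 / (4 * t^2))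
          + (exp (- 1 / (4 * t^2)) * (1/(2*t^3))) * Fn t
       = exp (- 1 / (4 * t^2)) * ((Fn t - t * J0 t ^2) / (2 * t^3))"
      using t by (simp add: field_simps power2_eq_square power3_eq_cube)
    have n: "exp (- 1 / (4 * t^2)) * ((Fn t - t * J0 t ^2) / (2 * t^3)) \<ge> 0"
      using Fn_ge[OF t] t by (intro mult_nonneg_nonneg divide_nonneg_pos) auto
    show "\<exists>y. (?G has_real_derivative y) (at t) \<and> y \<ge> 0"
      using d n unfolding e by blast
  qed
  also have "?G x \<le> Fn x"
  proof -
    have "Fn x \<ge> 0" using Fn_ge[of x] assms x0(1) by (smt (verit) mult_nonneg_nonneg zero_le_power2)
    moreover have "exp (- 1 / (4 * x^2)) \<le> 1" by simp
    ultimately show ?thesis by (simp add: mult_left_le)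
  qed
  finally show ?thesis unfolding Fmin_def .
qed

lemma J0_decay: assumes "x0 \<le> x" shows "J0 x ^2 \<le> Fmax / x"
proof -
  have x: "x > 0" using assms x0(1) by simp
  have "x * J0 x ^2 \<le> Fmax" using Fn_ge[OF x] Fn_upper[OF assms] by simp
  thus ?thesis using x by (simp add: field_simps)
qed


definition Wf :: "real \<Rightarrow> real \<Rightarrow> real" where
  "Wf a t = sqrt t * (D1 t * sin (t - a) - J0 t * cos (t - a)) + J0 t * sin (t - a) / (2 * sqrt t)"

lemma W_alg:
  fixes s y d1 d2 S C :: real
  assumes s: "s > 0" and d2: "d2 = (- d1) / (s * s) - y" and SC: "S^2 + C^2 = 1"
  shows "(s * ((d2 * S + d1 * C) - (d1 * C - y * S)) + (inverse s / 2) * (d1 * S - y * C))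
    + ((d1 * S + y * C) * (2 * s) - (y * S) * (2 * (inverse s / 2))) / ((2 * s) * (2 * s))
    = - y * S / (4 * (s * s) * s)"
  using s unfolding d2 by (simp add: field_simps)

lemma Wf_deriv: assumes t: "t > 0"
  shows "(Wf a has_real_derivative (- J0 t * sin (t - a) / (4 * t * sqrt t))) (at t)"
proof -
  have dsq: "(sqrt has_real_derivative inverse (sqrt t) / 2) (at t)" by (rule DERIV_real_sqrt[OF t])
  have dsin: "((\<lambda>t. sin (t - a)) has_real_derivative cos (t - a)) (at t)"
    by (auto intro!: derivative_eq_intros)
  have dcos: "((\<lambda>t. cos (t - a)) has_real_derivative - sin (t - a)) (at t)"
    by (auto intro!: derivative_eq_intros)
  have dP: "((\<lambda>t. D1 t * sin (t - a) - J0 t * cos (t - a)) has_real_derivative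
      (D2 t * sin (t - a) + D1 t * cos (t - a)) - (D1 t * cos (t - a) - J0 t * sin (t - a))) (at t)"
    using DERIV_diff[OF DERIV_mult[OF D1_deriv dsin] DERIV_mult[OF J0_deriv dcos]]
    by (simp add: algebra_simps)
  have dQ: "((\<lambda>t. J0 t * sin (t - a)) has_real_derivative D1 t * sin (t - a) + J0 t * cos (t - a)) (at t)"
    using DERIV_mult[OF J0_deriv dsin] by (simp add: algebra_simps)
  have dR: "((\<lambda>t. 2 * sqrt t) has_real_derivative 2 * (inverse (sqrt t) / 2)) (at t)"
    using DERIV_cmult[OF dsq, of 2] by simp
  have R0: "2 * sqrt t \<noteq> 0" using t by simp
  have dW: "(Wf a has_real_derivative
      (sqrt t * ((D2 t * sin (t - a) + D1 t * cos (t - a)) - (D1 t * cos (t - a) - J0 t * sin (t - a)))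
      + (inverse (sqrt t) / 2) * (D1 t * sin (t - a) - J0 t * cos (t - a)))
      + ((D1 t * sin (t - a) + J0 t * cos (t - a)) * (2 * sqrt t) - (J0 t * sin (t - a)) * (2 * (inverse (sqrt t) / 2)))
        / ((2 * sqrt t) * (2 * sqrt t))) (at t)"
    unfolding Wf_def
    by (rule DERIV_add[OF DERIV_mult'[OF dsq dP] DERIV_divide[OF dQ dR R0]])
  have s: "sqrt t > 0" using t by simp
  have ss: "sqrt t * sqrt t = t" using t by simp
  have d2: "D2 t = - D1 t / (sqrt t * sqrt t) - J0 t" unfolding ss using t by (simp add: D2_eq)
  show ?thesis using dW unfolding W_alg[OF s d2 sin_cos_squared_add] ss .
qed

definition Zs :: "real set" where "Zs = {x. 0 < x \<and> J0 x = 0}"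

lemma zero_gt: assumes "z \<in> Zs" shows "x0 < z"
proof (rule ccontr)
  assume "\<not> x0 < z"
  hence "J0 z > 1/2" using assms x0(3)[of z] by (simp add: Zs_def)
  thus False using assms by (simp add: Zs_def)
qed

lemma zero_D1: assumes "z \<in> Zs" shows "Fmin \<le> z * D1 z ^2" "z * D1 z ^2 \<le> Fmax"
proof -
  have "Fn z = z * D1 z ^2" using assms by (simp add: Zs_def Fn_def)
  moreover have "x0 \<le> z" using zero_gt[OF assms] by simp
  ultimately show "Fmin \<le> z * D1 z ^2" "z * D1 z ^2 \<le> Fmax" using Fn_lower Fn_upper by metis+
qed

lemma sq_sum_le: "(- u / w - v)^2 \<le> 2 * (u / w)^2 + 2 * (v::real)^2"
proof -
  have "0 \<le> (u / w - v)^2" by simp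
  moreover have "(- u / w - v)^2 = (u/w)^2 + 2 * (u/w) * v + v^2" by (simp add: power2_eq_square algebra_simps)
  moreover have "(u / w - v)^2 = (u/w)^2 - 2 * (u/w) * v + v^2" by (simp add: power2_eq_square algebra_simps)
  ultimately show ?thesis by linarith
qed

definition Dsep :: real where "Dsep = Fmin / (2 / x0 + 2 * Fmax)"

lemma Dsep_pos: "Dsep > 0"
  unfolding Dsep_def using Fmin_pos Fmax_pos x0(1) by (simp add: add_pos_pos)

lemma J0_differentiable: "J0 differentiable (at x)"
  using J0_deriv real_differentiable_def by blast

lemma sep: assumes a: "a \<in> Zs" and b: "b \<in> Zs" and ab: "a < b" shows "Dsep \<le> (b - a)^2"
proof -
  have ax: "x0 < a" using zero_gt[OF a] .
  have a0: "a > 0" using ax x0(1) by simp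
  obtain c where c: "a < c" "c < b" "DERIV J0 c :> 0"
    using Rolle[OF ab _ J0_cont J0_differentiable] a b by (auto simp: Zs_def)
  have Dc: "D1 c = 0" using DERIV_unique[OF J0_deriv c(3)] .
  obtain \<xi> where xi: "a < \<xi>" "\<xi> < c" "D1 c - D1 a = (c - a) * D2 \<xi>"
    using MVT2[OF c(1), of D1 D2] D1_deriv by blast
  have xi0: "\<xi> > 0" "x0 \<le> \<xi>" using xi ax a0 by auto
  define K where "K = 2 / x0 + 2 * Fmax"
  have K0: "K > 0" unfolding K_def using Fmax_pos x0(1) by (simp add: add_pos_pos)
  have "D2 \<xi> ^2 \<le> K / \<xi>"
  proof -
    have e: "D2 \<xi> = - D1 \<xi> / \<xi> - J0 \<xi>" using xi0 by (simp add: D2_eq)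
    have "D2 \<xi> ^2 \<le> 2 * (D1 \<xi> / \<xi>)^2 + 2 * J0 \<xi> ^2"
      unfolding e by (rule sq_sum_le)
    also have "(D1 \<xi> / \<xi>)^2 \<le> 1 / (x0 * \<xi>)"
    proof -
      have "D1 \<xi> ^2 \<le> 1" using D1_le1[of \<xi>] xi0 by (simp add: abs_square_le_1)
      hence "(D1 \<xi> / \<xi>)^2 \<le> 1 / \<xi>^2" by (simp add: power_divide divide_right_mono)
      also have "1 / \<xi>^2 \<le> 1 / (x0 * \<xi>)"
        using xi0 x0(1) by (intro divide_left_mono) (auto simp: power2_eq_square intro: mult_right_mono)
      finally show ?thesis .
    qed
    also have "J0 \<xi> ^2 \<le> Fmax / \<xi>" using J0_decay xi0 by simp
    finally have "D2 \<xi> ^2 \<le> 2 * (1 / (x0 * \<xi>)) + 2 * (Fmax / \<xi>)" by simp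
    also have "\<dots> = K / \<xi>" unfolding K_def using xi0 x0(1) by (simp add: field_simps)
    finally show ?thesis .
  qed
  also have "K / \<xi> \<le> K / a" using K0 xi a0 by (intro divide_left_mono) auto
  finally have d2b: "D2 \<xi> ^2 \<le> K / a" .
  have "D1 a = - ((c - a) * D2 \<xi>)" using xi(3) Dc by linarith
  hence "D1 a ^2 = (c - a)^2 * D2 \<xi> ^2" by (simp add: power_mult_distrib)
  also have "\<dots> \<le> (c - a)^2 * (K / a)" by (intro mult_left_mono d2b) auto
  finally have "a * D1 a ^2 \<le> a * ((c - a)^2 * (K / a))" using a0 by (intro mult_left_mono) auto
  also have "\<dots> = (c - a)^2 * K" using a0 by (simp add: field_simps)
  finally have "Fmin \<le> (c - a)^2 * K" using zero_D1(1)[OF a] by linarith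
  hence "Dsep \<le> (c - a)^2" unfolding Dsep_def K_def[symmetric] using K0 by (simp add: field_simps)
  also have "(c - a)^2 \<le> (b - a)^2" using c ab by (intro power_mono) auto
  finally show ?thesis .
qed

lemma Wf_a: "Wf a a = - sqrt a * J0 a" by (simp add: Wf_def)
lemma Wf_api: "Wf a (a + pi) = sqrt (a + pi) * J0 (a + pi)" by (simp add: Wf_def)

lemma osc: assumes a0: "0 < a" shows "\<exists>z\<in>Zs. a \<le> z \<and> z \<le> a + pi"
proof (rule ccontr)
  assume "\<not> ?thesis"
  hence nz: "\<And>z. a \<le> z \<Longrightarrow> z \<le> a + pi \<Longrightarrow> J0 z \<noteq> 0" using a0 by (auto simp: Zs_def)
  have api: "a \<le> a + pi" using pi_gt_zero by linarith
  have apos: "0 < a + pi" using a0 pi_gt_zero by linarith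
  have sinn: "\<And>t. a \<le> t \<Longrightarrow> t \<le> a + pi \<Longrightarrow> sin (t - a) \<ge> 0" by (intro sin_ge_zero) auto
  show False
  proof (cases "J0 a > 0")
    case True
    have pos: "J0 t > 0" if ta: "a \<le> t" "t \<le> a + pi" for t
    proof (rule ccontr)
      assume "\<not> J0 t > 0"
      then obtain x where "a \<le> x" "x \<le> t" "J0 x = 0"
        using IVT2'[of J0 t 0 a] True ta J0_cont by force
      thus False using nz[of x] ta by simp
    qed
    have "Wf a (a + pi) \<le> Wf a a"
    proof (rule DERIV_nonpos_imp_nonincreasing[OF api])
      fix t assume t: "a \<le> t" "t \<le> a + pi"
      have t0: "t > 0" using t a0 by simp
      have "- J0 t * sin (t - a) / (4 * t * sqrt t) \<le> 0"
        using pos[OF t] sinn[OF t] t0 by (intro divide_nonpos_pos) (auto simp: mult_nonneg_nonneg)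
      thus "\<exists>y. (Wf a has_real_derivative y) (at t) \<and> y \<le> 0" using Wf_deriv[OF t0] by blast
    qed
    moreover have "Wf a a < 0" unfolding Wf_a using True a0 by simp
    moreover have "Wf a (a + pi) > 0" unfolding Wf_api using pos[OF api order.refl] apos
      by (intro mult_pos_pos) auto
    ultimately show False by simp
  next
    case False
    hence neg0: "J0 a < 0" using nz[of a] api by force
    have neg: "J0 t < 0" if ta: "a \<le> t" "t \<le> a + pi" for t
    proof (rule ccontr)
      assume "\<not> J0 t < 0"
      then obtain x where "a \<le> x" "x \<le> t" "J0 x = 0"
        using IVT'[of J0 a 0 t] neg0 ta J0_cont by force
      thus False using nz[of x] ta by simp
    qed
    have "Wf a a \<le> Wf a (a + pi)"
    proof (rule DERIV_nonneg_imp_nondecreasing[OF api])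
      fix t assume t: "a \<le> t" "t \<le> a + pi"
      have t0: "t > 0" using t a0 by simp
      have "- J0 t * sin (t - a) / (4 * t * sqrt t) \<ge> 0"
        using neg[OF t] sinn[OF t] t0 by (intro divide_nonneg_pos) (auto simp: mult_nonpos_nonneg mult_nonneg_nonneg)
      thus "\<exists>y. (Wf a has_real_derivative y) (at t) \<and> y \<ge> 0" using Wf_deriv[OF t0] by blast
    qed
    moreover have "Wf a a > 0" unfolding Wf_a using neg0 a0 by (simp add: mult_pos_neg)
    moreover have "Wf a (a + pi) < 0" unfolding Wf_api using neg[OF api order.refl] apos
      by (intro mult_pos_neg) auto
    ultimately show False by simp
  qed
qed


definition dl :: real where "dl = sqrt Dsep"

lemma dl_pos: "dl > 0" unfolding dl_def using Dsep_pos by simp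

lemma sep_abs: assumes "a \<in> Zs" "b \<in> Zs" "a \<noteq> b" shows "dl \<le> \<bar>b - a\<bar>"
proof (cases "a < b")
  case True
  hence "Dsep \<le> (b - a)^2" using sep assms by blast
  hence "sqrt Dsep \<le> sqrt ((b - a)^2)" by (rule real_sqrt_le_mono)
  thus ?thesis unfolding dl_def by simp
next
  case False
  hence "b < a" using assms(3) by simp
  hence "Dsep \<le> (a - b)^2" using sep assms by blast
  hence "sqrt Dsep \<le> sqrt ((a - b)^2)" by (rule real_sqrt_le_mono)
  thus ?thesis unfolding dl_def by simp
qed

lemma zeros_in_interval:
  assumes A: "A \<subseteq> Zs" "A \<subseteq> {m..m + L}" and L: "0 \<le> L"
  shows "finite A" "card A \<le> nat \<lfloor>L / dl\<rfloor> + 1"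
proof -
  define f where "f x = \<lfloor>(x - m) / dl\<rfloor>" for x
  have inj: "inj_on f A"
  proof (rule inj_onI, rule ccontr)
    fix x y assume xy: "x \<in> A" "y \<in> A" "f x = f y" "x \<noteq> y"
    have d: "dl \<le> \<bar>y - x\<bar>" using sep_abs xy A by blast
    have "\<bar>(y - m) / dl - (x - m) / dl\<bar> < 1"
      using xy(3) unfolding f_def by linarith
    moreover have "(y - m) / dl - (x - m) / dl = (y - x) / dl" using dl_pos by (simp add: field_simps)
    ultimately have "\<bar>y - x\<bar> / dl < 1" using dl_pos by (simp add: abs_divide)
    hence "\<bar>y - x\<bar> < dl" using dl_pos by (simp add: field_simps)
    thus False using d by simp
  qed
  have img: "f ` A \<subseteq> {0..\<lfloor>L / dl\<rfloor>}"
  proof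
    fix k assume "k \<in> f ` A"
    then obtain x where x: "x \<in> A" "k = f x" by blast
    have "m \<le> x" "x \<le> m + L" using x A by auto
    hence "0 \<le> (x - m) / dl" "(x - m) / dl \<le> L / dl" using dl_pos by (auto intro: divide_right_mono)
    thus "k \<in> {0..\<lfloor>L / dl\<rfloor>}" unfolding x f_def by (auto intro: floor_mono)
  qed
  show "finite A" using inj_on_finite[OF inj img] by simp
  have "card A = card (f ` A)" using card_image[OF inj] by simp
  also have "\<dots> \<le> card {0..\<lfloor>L / dl\<rfloor>}" using img by (intro card_mono) auto
  also have "\<dots> = nat \<lfloor>L / dl\<rfloor> + 1"
  proof -
    have "0 \<le> \<lfloor>L / dl\<rfloor>" using L dl_pos by simp
    thus ?thesis by (simp add: nat_add_distrib)
  qed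
  finally show "card A \<le> nat \<lfloor>L / dl\<rfloor> + 1" .
qed

lemma Zs_pos: "z \<in> Zs \<Longrightarrow> 0 < z" by (simp add: Zs_def)

lemma finite_Zs_upto: "finite (Zs \<inter> {0..X})"
proof (cases "0 \<le> X")
  case True thus ?thesis using zeros_in_interval(1)[of "Zs \<inter> {0..X}" 0 X] by simp
qed simp

lemma finite_below: "finite {y \<in> Zs. y < x}"
proof -
  have "{y \<in> Zs. y < x} \<subseteq> Zs \<inter> {0..x}" using Zs_pos by fastforce
  thus ?thesis using finite_Zs_upto by (rule finite_subset)
qed

lemma count_strict: assumes "x \<in> Zs" "x' \<in> Zs" "x < x'"
  shows "card {y \<in> Zs. y < x} < card {y \<in> Zs. y < x'}"
  by (rule psubset_card_mono[OF finite_below]) (use assms in auto)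

lemma min_above: assumes "0 \<le> x"
  shows "\<exists>x'\<in>Zs. x < x' \<and> (\<forall>y\<in>Zs. y < x' \<longrightarrow> y \<le> x)"
proof -
  obtain z where z: "z \<in> Zs" "x + 1 \<le> z" "z \<le> x + 1 + pi" using osc[of "x+1"] assms by auto
  define S where "S = {y \<in> Zs. x < y \<and> y \<le> x + 1 + pi}"
  have "S \<subseteq> Zs \<inter> {0..x + 1 + pi}" unfolding S_def using Zs_pos by fastforce
  hence fS: "finite S" using finite_Zs_upto by (rule finite_subset)
  have zS: "z \<in> S" unfolding S_def using z by auto
  show ?thesis
  proof (intro bexI conjI ballI impI)
    show "Min S \<in> Zs" using Min_in[OF fS] zS unfolding S_def by blast
    show "x < Min S" using Min_in[OF fS] zS unfolding S_def by blast
    fix y assume y: "y \<in> Zs" "y < Min S"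
    show "y \<le> x"
    proof (rule ccontr)
      assume "\<not> y \<le> x"
      hence "y \<in> S" using y Min_le[OF fS zS] z unfolding S_def by auto
      thus False using Min_le[OF fS] y by force
    qed
  qed
qed

lemma count_exists: "\<exists>x\<in>Zs. card {y \<in> Zs. y < x} = k"
proof (induction k)
  case 0
  obtain x' where x': "x' \<in> Zs" "\<forall>y\<in>Zs. y < x' \<longrightarrow> y \<le> 0" using min_above[of 0] by auto
  have "{y \<in> Zs. y < x'} = {}" using x' Zs_pos by fastforce
  hence "card {y \<in> Zs. y < x'} = 0" by (metis card.empty)
  thus ?case using x'(1) by blast
next
  case (Suc k)
  then obtain x where x: "x \<in> Zs" "card {y \<in> Zs. y < x} = k" by blast
  obtain x' where x': "x' \<in> Zs" "x < x'" "\<forall>y\<in>Zs. y < x' \<longrightarrow> y \<le> x"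
    using min_above[of x] Zs_pos[OF x(1)] by auto
  have "{y \<in> Zs. y < x'} = insert x {y \<in> Zs. y < x}" using x x' by force
  hence "card {y \<in> Zs. y < x'} = Suc k" using x finite_below by simp
  thus ?case using x' by blast
qed

lemma bz_prop: "bessel_zero n \<in> Zs \<and> card {y \<in> Zs. y < bessel_zero n} = n - 1"
proof -
  have eq: "\<And>x. {y. 0 < y \<and> y < x \<and> J0 y = 0} = {y \<in> Zs. y < x}" by (auto simp: Zs_def)
  have ex1: "\<exists>!x. 0 < x \<and> J0 x = 0 \<and> card {y. 0 < y \<and> y < x \<and> J0 y = 0} = n - 1"
  proof -
    obtain x where x: "x \<in> Zs" "card {y \<in> Zs. y < x} = n - 1" using count_exists by blast
    show ?thesis
    proof (rule ex1I[of _ x])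
      show "0 < x \<and> J0 x = 0 \<and> card {y. 0 < y \<and> y < x \<and> J0 y = 0} = n - 1"
        using x unfolding eq by (auto simp: Zs_def)
      fix x' assume "0 < x' \<and> J0 x' = 0 \<and> card {y. 0 < y \<and> y < x' \<and> J0 y = 0} = n - 1"
      hence x': "x' \<in> Zs" "card {y \<in> Zs. y < x'} = n - 1" unfolding eq by (auto simp: Zs_def)
      show "x' = x"
      proof (rule ccontr)
        assume "x' \<noteq> x"
        hence "x < x' \<or> x' < x" by linarith
        thus False using count_strict[OF x(1) x'(1)] count_strict[OF x'(1) x(1)] x x' by auto
      qed
    qed
  qed
  have "0 < bessel_zero n \<and> J0 (bessel_zero n) = 0 \<and> card {y. 0 < y \<and> y < bessel_zero n \<and> J0 y = 0} = n - 1"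
    unfolding bessel_zero_def by (rule theI'[OF ex1])
  thus ?thesis unfolding eq by (auto simp: Zs_def)
qed

lemma bz_Zs: "bessel_zero n \<in> Zs" using bz_prop by blast

lemma bz_inj: assumes "1 \<le> n" "1 \<le> m" "bessel_zero n = bessel_zero m" shows "n = m"
  using bz_prop[of n] bz_prop[of m] assms by simp

lemma many_zeros: "n \<le> card (Zs \<inter> {0..real n * (pi + 1)})"
proof -
  have "\<forall>j. \<exists>z. z \<in> Zs \<and> 1 + real j * (pi + 1) \<le> z \<and> z \<le> 1 + real j * (pi + 1) + pi"
  proof
    fix j
    have "0 < 1 + real j * (pi + 1)" using pi_gt_zero by (simp add: add_pos_nonneg)
    thus "\<exists>z. z \<in> Zs \<and> 1 + real j * (pi + 1) \<le> z \<and> z \<le> 1 + real j * (pi + 1) + pi"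
      using osc by blast
  qed
  then obtain g where g: "\<And>j. g j \<in> Zs" "\<And>j. 1 + real j * (pi + 1) \<le> g j" "\<And>j. g j \<le> 1 + real j * (pi + 1) + pi"
    by metis
  have inj: "inj_on g {..<n}"
  proof (rule inj_onI, rule ccontr)
    fix i j assume ij: "i \<in> {..<n}" "j \<in> {..<n}" "g i = g j" "i \<noteq> j"
    show False
    proof (cases "i < j")
      case True
      hence "real i + 1 \<le> real j" by simp
      hence "(real i + 1) * (pi + 1) \<le> real j * (pi + 1)" using pi_gt_zero by (intro mult_right_mono) auto
      thus False using g(2)[of j] g(3)[of i] ij(3) by (simp add: algebra_simps)
    next
      case False
      hence "real j + 1 \<le> real i" using ij(4) by simp
      hence "(real j + 1) * (pi + 1) \<le> real i * (pi + 1)" using pi_gt_zero by (intro mult_right_mono) auto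
      thus False using g(2)[of i] g(3)[of j] ij(3) by (simp add: algebra_simps)
    qed
  qed
  have img: "g ` {..<n} \<subseteq> Zs \<inter> {0..real n * (pi + 1)}"
  proof
    fix z assume "z \<in> g ` {..<n}"
    then obtain j where j: "j < n" "z = g j" by blast
    have "real j + 1 \<le> real n" using j by simp
    hence "(real j + 1) * (pi + 1) \<le> real n * (pi + 1)" using pi_gt_zero by (intro mult_right_mono) auto
    moreover have "0 \<le> real j * (pi + 1)" using pi_gt_zero by simp
    ultimately show "z \<in> Zs \<inter> {0..real n * (pi + 1)}"
      using g[of j] j Zs_pos[OF g(1)[of j]] by (auto simp: algebra_simps)
  qed
  have fin: "finite (Zs \<inter> {0..real n * (pi + 1)})" by (rule finite_Zs_upto)
  have "n = card (g ` {..<n})" using card_image[OF inj] by simp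
  also have "\<dots> \<le> card (Zs \<inter> {0..real n * (pi + 1)})" by (rule card_mono[OF fin img])
  finally show ?thesis .
qed

lemma bz_upper: assumes "1 \<le> n" shows "bessel_zero n \<le> real n * (pi + 1)"
proof (rule ccontr)
  assume "\<not> ?thesis"
  hence "Zs \<inter> {0..real n * (pi + 1)} \<subseteq> {y \<in> Zs. y < bessel_zero n}" by auto
  hence "card (Zs \<inter> {0..real n * (pi + 1)}) \<le> card {y \<in> Zs. y < bessel_zero n}"
    by (intro card_mono finite_below)
  thus False using many_zeros[of n] bz_prop[of n] assms by linarith
qed


lemma powr_gap:
  assumes s: "x0 \<le> s" "s \<le> t" and p: "1 \<le> p" "p \<le> 2"
  shows "x0 * (t - s) \<le> t powr p - s powr p"
proof -
  have s0: "s > 0" using s x0(1) by simp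
  have t0: "t > 0" using s s0 by simp
  have "s powr (p - 1) \<le> t powr (p - 1)" using p s s0 by (intro powr_mono2) auto
  hence "t * s powr (p - 1) \<le> t * t powr (p - 1)" using t0 by (intro mult_left_mono) auto
  moreover have "t * t powr (p - 1) = t powr p" using t0 by (simp add: powr_mult_base)
  moreover have "s * s powr (p - 1) = s powr p" using s0 by (simp add: powr_mult_base)
  ultimately have 1: "(t - s) * s powr (p - 1) \<le> t powr p - s powr p" by (simp add: algebra_simps)
  have 2: "x0 \<le> s powr (p - 1)"
  proof (cases "1 \<le> s")
    case True
    hence "1 \<le> s powr (p - 1)" using p by (intro ge_one_powr_ge_zero) auto
    thus ?thesis using x0(2) by simp
  next
    case False
    hence "s powr 1 \<le> s powr (p - 1)" using p s0 by (intro powr_mono') auto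
    thus ?thesis using s0 s by simp
  qed
  have "x0 * (t - s) \<le> s powr (p - 1) * (t - s)" using 2 s by (intro mult_right_mono) auto
  thus ?thesis using 1 by (simp add: mult.commute)
qed

definition Kc :: nat where "Kc = nat \<lfloor>(1 / x0) / dl\<rfloor> + 1"

lemma fiber_bound:
  assumes B: "finite B" "\<And>n. n \<in> B \<Longrightarrow> 1 \<le> n"
    "\<And>n. n \<in> B \<Longrightarrow> \<bar>bessel_zero n powr p - c\<bar> \<le> 1/2"
    and p: "1 \<le> p" "p \<le> 2"
  shows "card B \<le> Kc"
proof (cases "B = {}")
  case True thus ?thesis by simp
next
  case False
  define A where "A = bessel_zero ` B"
  have inj: "inj_on bessel_zero B" using bz_inj B(2) by (meson inj_onI)
  have AZ: "A \<subseteq> Zs" unfolding A_def using bz_Zs by blast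
  have fA: "finite A" "A \<noteq> {}" unfolding A_def using B(1) False by auto
  define m where "m = Min A"
  have mA: "m \<in> A" unfolding m_def using Min_in fA by blast
  have "A \<subseteq> {m..m + 1 / x0}"
  proof
    fix t assume tA: "t \<in> A"
    have mt: "m \<le> t" unfolding m_def using Min_le fA tA by blast
    have mx: "x0 \<le> m" using zero_gt AZ mA by fastforce
    have "\<bar>t powr p - c\<bar> \<le> 1/2" "\<bar>m powr p - c\<bar> \<le> 1/2" using tA mA B(3) unfolding A_def by auto
    hence "t powr p - m powr p \<le> 1" by linarith
    hence "x0 * (t - m) \<le> 1" using powr_gap[OF mx mt p] by linarith
    hence "t - m \<le> 1 / x0" using x0(1) by (simp add: field_simps)
    thus "t \<in> {m..m + 1 / x0}" using mt by simp
  qed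
  moreover have "0 \<le> 1 / x0" using x0(1) by simp
  ultimately have "card A \<le> nat \<lfloor>(1 / x0) / dl\<rfloor> + 1"
    by (rule zeros_in_interval(2)[OF AZ])
  moreover have "card A = card B" unfolding A_def using card_image[OF inj] .
  ultimately show ?thesis unfolding Kc_def by simp
qed

lemma part1:
  fixes \<alpha> :: real
  assumes "1 / 2 \<le> \<alpha>" and "\<alpha> < 1"
  shows "\<exists>C. \<forall>N1 N2 \<tau>. 1 \<le> N2 \<longrightarrow> N2 \<le> N1 \<longrightarrow>
            real (card (Lambda \<alpha> N1 N2 \<tau>)) \<le> C * real N2"
proof (intro exI allI impI)
  fix N1 N2 \<tau> :: nat assume N: "1 \<le> N2" "N2 \<le> N1"
  have p: "1 \<le> 2 * \<alpha>" "2 * \<alpha> \<le> 2" using assms by auto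
  define F where "F n2 = {n1. sim n1 N1 \<and>
     \<bar>bessel_zero n1 powr (2 * \<alpha>) + bessel_zero n2 powr (2 * \<alpha>) - real \<tau>\<bar> \<le> 1 / 2}" for n2
  have sub: "Lambda \<alpha> N1 N2 \<tau> \<subseteq> (\<Union>n2\<in>{N2..<2*N2}. (\<lambda>n1. (n1, n2)) ` F n2)"
    unfolding Lambda_def F_def by (auto simp: sim_def)
  have finF: "finite (F n2)" for n2
    by (rule finite_subset[of _ "{..<2*N1}"]) (auto simp: F_def sim_def)
  have cF: "card (F n2) \<le> Kc" for n2
  proof (rule fiber_bound[OF finF _ _ p])
    show "\<And>n. n \<in> F n2 \<Longrightarrow> 1 \<le> n" using N by (auto simp: F_def sim_def)
    show "\<And>n. n \<in> F n2 \<Longrightarrow> \<bar>bessel_zero n powr (2 * \<alpha>) - (real \<tau> - bessel_zero n2 powr (2 * \<alpha>))\<bar> \<le> 1/2"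
      by (auto simp: F_def algebra_simps)
  qed
  have "card (Lambda \<alpha> N1 N2 \<tau>) \<le> card (\<Union>n2\<in>{N2..<2*N2}. (\<lambda>n1. (n1, n2)) ` F n2)"
    by (rule card_mono[OF _ sub]) (auto intro: finF)
  also have "\<dots> \<le> (\<Sum>n2\<in>{N2..<2*N2}. card ((\<lambda>n1. (n1, n2)) ` F n2))" by (rule card_UN_le) simp
  also have "\<dots> \<le> (\<Sum>n2\<in>{N2..<2*N2}. Kc)"
    by (intro sum_mono order.trans[OF card_image_le[OF finF] cF])
  also have "\<dots> = Kc * N2" by simp
  finally show "real (card (Lambda \<alpha> N1 N2 \<tau>)) \<le> real Kc * real N2"
    by (metis of_nat_le_iff of_nat_mult)
qed


definition Nr :: "real measure" where
  "Nr = density lborel (\<lambda>r. ennreal (2 * pi * r * indicator {0..1} r))"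
definition Mr :: "real measure" where
  "Mr = distr (restrict_space lborel Theta) borel (\<lambda>x::real^2. norm x)"

definition Vr :: "real \<Rightarrow> real" where
  "Vr x = (if x < 0 then pi else if x < 1 then pi - pi * x^2 else 0)"

lemma Theta_sets[measurable]: "Theta \<in> sets lborel" unfolding Theta_def by simp
lemma Theta_borel[measurable]: "Theta \<in> sets borel" unfolding Theta_def by simp
lemma norm_meas_restr[measurable]: "(\<lambda>y::real^2. norm y) \<in> borel_measurable (restrict_space lborel Theta)"
  by (intro measurable_restrict_space1) simp

lemma ball_meas: "r \<ge> 0 \<Longrightarrow> emeasure lborel (ball (0::real^2) r) = ennreal (pi * r^2)"
  using emeasure_ball[of r "0::real^2"] by (simp add: unit_ball_vol_2)
lemma cball_meas: "r \<ge> 0 \<Longrightarrow> emeasure lborel (cball (0::real^2) r) = ennreal (pi * r^2)"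
  using emeasure_cball[of r "0::real^2"] by (simp add: unit_ball_vol_2)

lemma Mr_Ioi: "emeasure Mr {x<..} = ennreal (Vr x)"
proof -
  have "emeasure Mr {x<..} = emeasure (restrict_space lborel Theta) ((\<lambda>y::real^2. norm y) -` {x<..} \<inter> space (restrict_space lborel Theta))"
    unfolding Mr_def by (subst emeasure_distr) auto
  also have "\<dots> = emeasure lborel (Theta \<inter> {y. x < norm y})"
    by (subst emeasure_restrict_space) (auto intro!: arg_cong[where f="emeasure lborel"])
  also have "\<dots> = ennreal (Vr x)"
  proof (cases "x < 0")
    case True
    hence "Theta \<inter> {y. x < norm y} = ball 0 1" unfolding Theta_def
      using norm_ge_zero by (auto simp: dist_norm intro: less_le_trans)
    thus ?thesis using True ball_meas[of 1] by (simp add: Vr_def)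
  next
    case False
    show ?thesis
    proof (cases "x < 1")
      case True
      have "Theta \<inter> {y. x < norm y} = ball 0 1 - cball 0 x" unfolding Theta_def
        by (auto simp: dist_norm)
      moreover have "emeasure lborel (ball (0::real^2) 1 - cball 0 x) = emeasure lborel (ball (0::real^2) 1) - emeasure lborel (cball (0::real^2) x)"
        using emeasure_Diff[of lborel "cball (0::real^2) x" "ball 0 1"] True False emeasure_lborel_cball_finite[of "0::real^2" x]
        by (auto simp: subset_iff)
      moreover have "ennreal (pi * 1^2) - ennreal (pi * x^2) = ennreal (pi - pi * x^2)"
        using True False by (subst ennreal_minus) (auto intro: mult_left_mono simp: power_le_one)
      ultimately show ?thesis using True False ball_meas[of 1] cball_meas[of x] by (simp add: Vr_def)
    next
      case False2: False
      hence "Theta \<inter> {y. x < norm y} = {}" unfolding Theta_def by (auto simp: dist_norm)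
      thus ?thesis using False False2 by (simp add: Vr_def)
    qed
  qed
  finally show ?thesis .
qed

lemma Nr_Ioi: "emeasure Nr {x<..} = ennreal (Vr x)"
proof -
  have "emeasure Nr {x<..} = (\<integral>\<^sup>+ r. ennreal (2 * pi * r * indicator {0..1} r) * indicator {x<..} r \<partial>lborel)"
    unfolding Nr_def by (subst emeasure_density) auto
  also have "\<dots> = ennreal (Vr x)"
  proof (cases "x < 1")
    case True
    define c where "c = max 0 x"
    have c: "0 \<le> c" "c \<le> 1" using True unfolding c_def by auto
    have "(\<integral>\<^sup>+ r. ennreal (2 * pi * r * indicator {0..1} r) * indicator {x<..} r \<partial>lborel)
        = (\<integral>\<^sup>+ r. ennreal (2 * pi * r) * indicator {c..1} r \<partial>lborel)"
    proof (rule nn_integral_cong_AE)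
      show "AE r in lborel. ennreal (2 * pi * r * indicator {0..1} r) * indicator {x<..} r
              = ennreal (2 * pi * r) * indicator {c..1} r"
        using AE_lborel_singleton[of x]
        by eventually_elim (auto simp: c_def indicator_def)
    qed
    also have "\<dots> = ennreal (pi * 1^2 - pi * c^2)"
    proof (rule nn_integral_FTC_Icc[where f="\<lambda>r. 2 * pi * r" and F="\<lambda>r. pi * r^2" and a=c and b=1])
      show "(\<lambda>r. 2 * pi * r) \<in> borel_measurable borel" by simp
      fix r assume "r \<in> {c..1}"
      show "((\<lambda>r. pi * r^2) has_real_derivative 2 * pi * r) (at r)"
        by (auto intro!: derivative_eq_intros)
      show "0 \<le> 2 * pi * r" using \<open>r \<in> {c..1}\<close> c by simp
    qed (use c in simp)
    also have "pi * 1^2 - pi * c^2 = pi - pi * c^2" by simp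
    also have "pi - pi * c^2 = Vr x" unfolding Vr_def c_def using True by auto
    finally show ?thesis .
  next
    case False
    have "(\<lambda>r. ennreal (2 * pi * r * indicator {0..1} r) * indicator {x<..} r) = (\<lambda>r. 0)"
      using False by (auto simp: indicator_def fun_eq_iff)
    thus ?thesis using False by (simp add: Vr_def)
  qed
  finally show ?thesis .
qed

lemma Mr_eq_Nr: "Mr = Nr"
proof (rule measure_eqI_lessThan)
  show "sets Mr = sets borel" unfolding Mr_def by simp
  show "sets Nr = sets borel" unfolding Nr_def by simp
  show "emeasure Mr {x<..} < \<infinity>" for x using Mr_Ioi by simp
  show "emeasure Mr {x<..} = emeasure Nr {x<..}" for x using Mr_Ioi Nr_Ioi by simp
qed

lemma polar:
  fixes g :: "real \<Rightarrow> real"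
  assumes [measurable]: "g \<in> borel_measurable borel"
  shows "(LINT y : Theta | lborel. g (norm y)) = (LINT r | lborel. indicator {0..1} r * (2 * pi * r * g r))"
proof -
  have "(LINT y : Theta | lborel. g (norm y)) = (LINT y | restrict_space lborel Theta. g (norm y))"
    unfolding set_lebesgue_integral_def by (subst integral_restrict_space) auto
  also have "\<dots> = (LINT r | Mr. g r)" unfolding Mr_def by (subst integral_distr) auto
  also have "\<dots> = (LINT r | Nr. g r)" by (simp add: Mr_eq_Nr)
  also have "\<dots> = (LINT r | lborel. (2 * pi * r * indicator {0..1} r) * g r)"
    unfolding Nr_def by (subst integral_density) (auto simp: indicator_def)
  also have "\<dots> = (LINT r | lborel. indicator {0..1} r * (2 * pi * r * g r))"
    by (simp add: mult_ac)
  finally show ?thesis .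
qed


lemma J0_chain[derivative_intros]:
  "(f has_real_derivative f') (at x within s) \<Longrightarrow> ((\<lambda>x. J0 (f x)) has_real_derivative D1 (f x) * f') (at x within s)"
  by (rule DERIV_chain2[OF J0_deriv])
lemma D1_chain[derivative_intros]:
  "(f has_real_derivative f') (at x within s) \<Longrightarrow> ((\<lambda>x. D1 (f x)) has_real_derivative D2 (f x) * f') (at x within s)"
  by (rule DERIV_chain2[OF D1_deriv])

lemma alg1:
  fixes r a p d1 d2 y :: real
  assumes "(a * r) * d2 + d1 + (a * r) * y = 0"
  shows "2 * r * p * (d1^2 + y^2) + (2 * (d2 * a * d1) + 2 * (d1 * a * y)) * (p * r^2) = 2 * p * r * y^2"
proof -
  have "2 * r * p * (d1^2 + y^2) + (2 * (d2 * a * d1) + 2 * (d1 * a * y)) * (p * r^2) - 2 * p * r * y^2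
     = 2 * r * p * d1 * ((a * r) * d2 + d1 + (a * r) * y)" by (simp add: algebra_simps power2_eq_square)
  thus ?thesis using assms by simp
qed

lemma F_deriv: "((\<lambda>r. pi * r^2 * (D1 (a * r) ^2 + J0 (a * r) ^2)) has_real_derivative 2 * pi * r * J0 (a * r) ^2) (at r)"
  by (auto intro!: derivative_eq_intros alg1 J0_ode)

lemma J0_borel[measurable]: "J0 \<in> borel_measurable borel"
  by (rule borel_measurable_continuous_onI[OF J0_cont])

lemma J0_comp_cont[continuous_intros]: "continuous_on s f \<Longrightarrow> continuous_on s (\<lambda>x. J0 (f x))"
  by (rule continuous_on_compose2[OF J0_cont[of UNIV]]) auto

lemma normalizer: "L2sq (\<lambda>y. J0 (a * norm y)) = pi * (D1 a ^2 + J0 a ^2)"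
proof -
  have "L2sq (\<lambda>y. J0 (a * norm y)) = (LINT r | lborel. indicator {0..1} r * (2 * pi * r * (J0 (a * r))^2))"
    unfolding L2sq_def using polar[of "\<lambda>r. (J0 (a * r))^2"] by simp
  also have "\<dots> = (LINT r | lborel. indicator {0..1} r *\<^sub>R (2 * pi * r * (J0 (a * r))^2))" by simp
  also have "\<dots> = pi * 1^2 * (D1 (a * 1) ^2 + J0 (a * 1) ^2) - pi * 0^2 * (D1 (a * 0) ^2 + J0 (a * 0) ^2)"
  proof (rule integral_FTC_atLeastAtMost)
    fix x :: real
    show "((\<lambda>r. pi * r^2 * (D1 (a * r) ^2 + J0 (a * r) ^2)) has_vector_derivative 2 * pi * x * (J0 (a * x))^2) (at x within {0..1})"
      using F_deriv[of a x] by (simp add: has_real_derivative_iff_has_vector_derivative has_vector_derivative_at_within)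
  next
    show "continuous_on {0..1} (\<lambda>r. 2 * pi * r * (J0 (a * r))^2)" by (intro continuous_intros)
  qed simp
  finally show ?thesis by simp
qed

definition Kd :: real where "Kd = max 2 (Fmax * (1 + 1 / x0))"

lemma J0_sq_bound: assumes t: "0 \<le> t" shows "J0 t ^2 \<le> Kd / (1 + t)"
proof (cases "t \<le> x0")
  case True
  have "J0 t ^2 \<le> 1" using J0_le1[OF t] by (simp add: abs_square_le_1)
  also have "1 \<le> 2 / (1 + t)" using True x0(2) t by (simp add: field_simps)
  also have "2 / (1 + t) \<le> Kd / (1 + t)" unfolding Kd_def using t by (intro divide_right_mono) auto
  finally show ?thesis .
next
  case False
  hence tx: "x0 \<le> t" "t > 0" using x0(1) by auto
  have "J0 t ^2 \<le> Fmax / t" using J0_decay tx by simp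
  also have "Fmax / t = Fmax * (1 + 1 / t) / (1 + t)"
  proof -
    have "1 + 1 / t = (1 + t) / t" using tx by (simp add: field_simps)
    thus ?thesis using tx by simp
  qed
  also have "\<dots> \<le> Fmax * (1 + 1 / x0) / (1 + t)"
    using tx Fmax_pos x0(1) by (intro divide_right_mono mult_left_mono add_left_mono divide_left_mono) auto
  also have "\<dots> \<le> Kd / (1 + t)" unfolding Kd_def using tx by (intro divide_right_mono) auto
  finally show ?thesis .
qed

lemma Kd_pos: "Kd > 0" unfolding Kd_def by simp

lemma product_bound:
  assumes a: "a > 0" and b: "b > 0" and k: "k \<ge> 0"
  shows "(LINT r | lborel. indicator {0..1} r * (2 * pi * r * (k * ((J0 (a * r))^2 * (J0 (b * r))^2))))
     \<le> k * (2 * pi * Kd^2 / (a * b)) * ln (1 + b)"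
proof -
  define B where "B r = (k * (2 * pi * Kd^2 / a) / (1 + b * r)) * indicator {0..1} r" for r
  have bpos: "\<And>r. 0 \<le> r \<Longrightarrow> 1 + b * r > 0" using b by (simp add: add_pos_nonneg)
  have intB: "integrable lborel B" unfolding B_def
  proof (rule borel_integrable_atLeastAtMost)
    fix x :: real assume "0 \<le> x" "x \<le> 1"
    hence "1 + b * x \<noteq> 0" using bpos[of x] by simp
    thus "isCont (\<lambda>r. k * (2 * pi * Kd\<^sup>2 / a) / (1 + b * r)) x" using a by (auto intro!: continuous_intros)
  qed
  have le: "indicator {0..1} r * (2 * pi * r * (k * ((J0 (a * r))^2 * (J0 (b * r))^2))) \<le> B r" for r
  proof (cases "r \<in> {0..1}")
    case True
    hence r: "0 \<le> r" "r \<le> 1" by auto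
    have ja: "(J0 (a * r))^2 \<le> Kd / (1 + a * r)" using J0_sq_bound a r by simp
    have jb: "(J0 (b * r))^2 \<le> Kd / (1 + b * r)" using J0_sq_bound b r by simp
    have "r * (J0 (a * r))^2 \<le> r * (Kd / (1 + a * r))" using ja r by (intro mult_left_mono) auto
    also have "r * (Kd / (1 + a * r)) \<le> Kd / a"
    proof -
      have ar: "1 + a * r > 0" using a r by (simp add: add_pos_nonneg)
      have q: "a * r / (1 + a * r) \<le> 1" using ar by simp
      have "r * (Kd / (1 + a * r)) = (Kd / a) * (a * r / (1 + a * r))" using a ar by (simp add: field_simps)
      also have "\<dots> \<le> (Kd / a) * 1" using q a Kd_pos by (intro mult_left_mono) auto
      finally show ?thesis by simp
    qed
    finally have 1: "r * (J0 (a * r))^2 \<le> Kd / a" .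
    have "(r * (J0 (a * r))^2) * (J0 (b * r))^2 \<le> (Kd / a) * (Kd / (1 + b * r))"
      using 1 jb Kd_pos a by (intro mult_mono) auto
    hence "2 * pi * k * ((r * (J0 (a * r))^2) * (J0 (b * r))^2) \<le> 2 * pi * k * ((Kd / a) * (Kd / (1 + b * r)))"
      using k by (intro mult_left_mono) auto
    thus ?thesis using True unfolding B_def by (simp add: power2_eq_square mult_ac)
  next
    case False thus ?thesis by (simp add: B_def)
  qed
  have Bnn: "0 \<le> B r" for r unfolding B_def using b k Kd_pos a
    by (auto simp: indicator_def intro!: divide_nonneg_pos mult_nonneg_nonneg add_pos_nonneg)
  have "(LINT r | lborel. indicator {0..1} r * (2 * pi * r * (k * ((J0 (a * r))^2 * (J0 (b * r))^2))))
        \<le> (LINT r | lborel. B r)"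
    by (rule integral_mono'[OF intB]) (use le Bnn in auto)
  also have "(LINT r | lborel. B r) = k * (2 * pi * Kd^2 / a) / b * ln (1 + b * 1) - k * (2 * pi * Kd^2 / a) / b * ln (1 + b * 0)"
    unfolding B_def
  proof (rule integral_FTC_Icc_nonneg)
    fix x :: real assume x: "x \<in> {0..1}"
    have pos: "1 + b * x > 0" using b x by (simp add: add_pos_nonneg)
    have d1: "((\<lambda>r. 1 + b * r) has_real_derivative b) (at x)" by (auto intro!: derivative_eq_intros)
    have d2: "((\<lambda>r. ln (1 + b * r)) has_real_derivative (1 / (1 + b * x)) * b) (at x)"
      by (rule DERIV_chain2[OF DERIV_ln_divide[OF pos] d1])
    have d3: "((\<lambda>r. k * (2 * pi * Kd^2 / a) / b * ln (1 + b * r)) has_real_derivative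
        k * (2 * pi * Kd^2 / a) / b * ((1 / (1 + b * x)) * b)) (at x)"
      by (rule DERIV_cmult[OF d2])
    have gen: "\<And>K q. K / b * ((1 / q) * b) = K / q" using b by simp
    show "((\<lambda>r. k * (2 * pi * Kd^2 / a) / b * ln (1 + b * r)) has_real_derivative k * (2 * pi * Kd^2 / a) / (1 + b * x)) (at x)"
      using d3 unfolding gen .
    show "0 \<le> k * (2 * pi * Kd^2 / a) / (1 + b * x)"
      using b x k a Kd_pos by (intro divide_nonneg_pos mult_nonneg_nonneg) (auto simp: add_pos_nonneg)
  qed (auto intro!: borel_measurable_continuous_onI)
  also have "\<dots> = k * (2 * pi * Kd^2 / (a * b)) * ln (1 + b)" by simp
  finally show ?thesis .
qed

lemma La_facts: assumes "a \<in> Zs"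
  shows "L2sq (\<lambda>y. J0 (a * norm y)) = pi * D1 a ^2" "pi * Fmin / a \<le> L2sq (\<lambda>y. J0 (a * norm y))"
    "0 < L2sq (\<lambda>y. J0 (a * norm y))"
proof -
  have a0: "a > 0" "J0 a = 0" using assms by (auto simp: Zs_def)
  show e: "L2sq (\<lambda>y. J0 (a * norm y)) = pi * D1 a ^2" using normalizer[of a] a0 by simp
  have "Fmin \<le> a * D1 a ^2" using zero_D1(1)[OF assms] .
  hence "Fmin / a \<le> D1 a ^2" using a0 by (simp add: field_simps)
  hence "pi * (Fmin / a) \<le> pi * D1 a ^2" by (intro mult_left_mono) auto
  thus "pi * Fmin / a \<le> L2sq (\<lambda>y. J0 (a * norm y))" using e by simp
  moreover have "0 < pi * Fmin / a" using Fmin_pos a0 by simp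
  ultimately show "0 < L2sq (\<lambda>y. J0 (a * norm y))" by linarith
qed

lemma inv_L_bound: assumes "a \<in> Zs" shows "1 / L2sq (\<lambda>y. J0 (a * norm y)) \<le> a / (pi * Fmin)"
proof -
  have a0: "a > 0" using assms by (simp add: Zs_def)
  have "1 / L2sq (\<lambda>y. J0 (a * norm y)) \<le> 1 / (pi * Fmin / a)"
    using La_facts[OF assms] Fmin_pos a0 by (intro divide_left_mono mult_pos_pos) auto
  thus ?thesis using a0 by simp
qed

lemma ln_bound: assumes "1 \<le> N2" "sim n2 N2" "\<epsilon> > 0"
  shows "ln (1 + bessel_zero n2) \<le> (ln 11 + 1 / \<epsilon>) * real N2 powr \<epsilon>"
proof -
  have n2: "1 \<le> n2" "n2 < 2 * N2" using assms by (auto simp: sim_def)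
  have b: "bessel_zero n2 > 0" using bz_Zs Zs_pos by blast
  have "bessel_zero n2 \<le> real n2 * (pi + 1)" using bz_upper n2 by simp
  also have "\<dots> \<le> (2 * real N2) * 5"
    using n2 pi_less_4 by (intro mult_mono) auto
  finally have "1 + bessel_zero n2 \<le> 11 * real N2" using assms(1) by simp
  hence "ln (1 + bessel_zero n2) \<le> ln (11 * real N2)" using b by simp
  also have "\<dots> = ln 11 + ln (real N2)" using assms(1) by (simp add: ln_mult)
  also have "ln (real N2) \<le> real N2 powr \<epsilon> / \<epsilon>" using ln_powr_bound assms by simp
  also have "ln 11 \<le> ln 11 * real N2 powr \<epsilon>"
  proof -
    have "1 \<le> real N2 powr \<epsilon>" using assms by (intro ge_one_powr_ge_zero) auto
    moreover have "0 \<le> ln (11::real)" by simp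
    ultimately show ?thesis by (simp add: mult_le_cancel_left1)
  qed
  finally show ?thesis by (simp add: algebra_simps)
qed

lemma alg2:
  fixes a b p F K l :: real
  assumes "a \<noteq> 0" "b \<noteq> 0" "p \<noteq> 0" "F \<noteq> 0"
  shows "((a / (p * F)) * (b / (p * F))) * (2 * p * K / (a * b)) * l = (2 * K / (p * F^2)) * l"
  using assms by (simp add: field_simps power2_eq_square)

lemma part2:
  assumes eps: "\<epsilon> > 0"
  shows "\<exists>C. \<forall>N1 N2 n1 n2. 1 \<le> N2 \<longrightarrow> N2 \<le> N1 \<longrightarrow> sim n1 N1 \<longrightarrow> sim n2 N2 \<longrightarrow>
            L2sq (\<lambda>x. efun n1 x * efun n2 x) \<le> C * real N2 powr \<epsilon>"
proof (intro exI allI impI)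
  fix N1 N2 n1 n2 :: nat
  assume N: "1 \<le> N2" "N2 \<le> N1" "sim n1 N1" "sim n2 N2"
  define a where "a = bessel_zero n1"
  define b where "b = bessel_zero n2"
  have aZ: "a \<in> Zs" and bZ: "b \<in> Zs" unfolding a_def b_def by (rule bz_Zs)+
  have a0: "a > 0" and b0: "b > 0" using aZ bZ Zs_pos by auto
  define La where "La = L2sq (\<lambda>y. J0 (a * norm y))"
  define Lb where "Lb = L2sq (\<lambda>y. J0 (b * norm y))"
  have La0: "La > 0" and Lb0: "Lb > 0" unfolding La_def Lb_def using La_facts aZ bZ by auto
  define k where "k = 1 / (La * Lb)"
  have k0: "k \<ge> 0" unfolding k_def using La0 Lb0 by simp
  have sq: "(efun n1 x * efun n2 x)^2 = k * ((J0 (a * norm x))^2 * (J0 (b * norm x))^2)" for x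
  proof -
    have "efun n1 x * efun n2 x = (J0 (a * norm x) * J0 (b * norm x)) / (sqrt La * sqrt Lb)"
      unfolding efun_def a_def b_def La_def Lb_def by simp
    hence "(efun n1 x * efun n2 x)^2 = (J0 (a * norm x) * J0 (b * norm x))^2 / ((sqrt La)^2 * (sqrt Lb)^2)"
      by (simp add: power_divide power_mult_distrib)
    also have "\<dots> = (J0 (a * norm x) * J0 (b * norm x))^2 / (La * Lb)" using La0 Lb0 by simp
    finally show ?thesis unfolding k_def by (simp add: power_mult_distrib)
  qed
  have "L2sq (\<lambda>x. efun n1 x * efun n2 x) = (LINT y : Theta | lborel. k * ((J0 (a * norm y))^2 * (J0 (b * norm y))^2))"
    unfolding L2sq_def sq ..
  also have "\<dots> = (LINT r | lborel. indicator {0..1} r * (2 * pi * r * (k * ((J0 (a * r))^2 * (J0 (b * r))^2))))"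
    using polar[of "\<lambda>r. k * ((J0 (a * r))^2 * (J0 (b * r))^2)"] by simp
  also have "\<dots> \<le> k * (2 * pi * Kd^2 / (a * b)) * ln (1 + b)"
    by (rule product_bound[OF a0 b0 k0])
  also have "\<dots> \<le> ((a / (pi * Fmin)) * (b / (pi * Fmin))) * (2 * pi * Kd^2 / (a * b)) * ln (1 + b)"
  proof -
    have kk: "k = (1 / La) * (1 / Lb)" unfolding k_def by simp
    have an: "0 \<le> a / (pi * Fmin)" using a0 Fmin_pos by simp
    have "(1 / La) * (1 / Lb) \<le> (a / (pi * Fmin)) * (b / (pi * Fmin))"
      using inv_L_bound[OF aZ] inv_L_bound[OF bZ] La0 Lb0 an unfolding La_def Lb_def
      by (intro mult_mono) auto
    hence kl: "k \<le> (a / (pi * Fmin)) * (b / (pi * Fmin))" using kk by simp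
    have nn: "0 \<le> (2 * pi * Kd^2 / (a * b)) * ln (1 + b)" using a0 b0 by simp
    have "k * ((2 * pi * Kd^2 / (a * b)) * ln (1 + b)) \<le> ((a / (pi * Fmin)) * (b / (pi * Fmin))) * ((2 * pi * Kd^2 / (a * b)) * ln (1 + b))"
      by (rule mult_right_mono[OF kl nn])
    thus ?thesis by (simp only: mult.assoc)
  qed
  also have "\<dots> = (2 * Kd^2 / (pi * Fmin^2)) * ln (1 + b)"
    by (rule alg2) (use a0 b0 Fmin_pos in auto)
  also have "\<dots> \<le> (2 * Kd^2 / (pi * Fmin^2)) * ((ln 11 + 1 / \<epsilon>) * real N2 powr \<epsilon>)"
    using ln_bound[OF N(1) N(4) eps] unfolding b_def by (intro mult_left_mono) auto
  finally show "L2sq (\<lambda>x. efun n1 x * efun n2 x) \<le> ((2 * Kd^2 / (pi * Fmin^2)) * (ln 11 + 1 / \<epsilon>)) * real N2 powr \<epsilon>"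
    by (simp add: mult.assoc)
qed

theorem mainTheorem3:
  fixes \<alpha> :: real
  assumes "1 / 2 \<le> \<alpha>" and "\<alpha> < 1"
  shows "(\<exists>C. \<forall>N1 N2 \<tau>. 1 \<le> N2 \<longrightarrow> N2 \<le> N1 \<longrightarrow>
            real (card (Lambda \<alpha> N1 N2 \<tau>)) \<le> C * real N2)
       \<and> (\<forall>\<epsilon>>0. \<exists>C. \<forall>N1 N2 n1 n2. 1 \<le> N2 \<longrightarrow> N2 \<le> N1 \<longrightarrow> sim n1 N1 \<longrightarrow> sim n2 N2 \<longrightarrow>
            L2sq (\<lambda>x. efun n1 x * efun n2 x) \<le> C * real N2 powr \<epsilon>)"
  using part1[OF assms] part2 by blast


end
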